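(* Let $n\ge 1$, $\mathbf a\in\mathbb{R}^n$, and write $P=P(\mathbf a)$, $N=N(\mathbf a)$, $Z=Z(\mathbf a)$. Then $$P(J_{n,1}\mathbf a)\ge \frac{P(P+1)}{2}+PZ,\quad N(J_{n,1}\mathbf a)\ge \frac{N(N+1)}{2}+NZ,\quad Z(J_{n,1}\mathbf a)\le \frac{Z(Z+1)}{2}+PN,$$ and all three are equalities when $PN=0$.
   Context: For $\mathbf x\in\mathbb{R}^m$, $P(\mathbf x)$, $N(\mathbf x)$, $Z(\mathbf x)$ denote the numbers of positive, negative and zero components of $\mathbf x$. $J_{n,1}$ is the matrix, with respect to the left lexicographic monomial bases $(x_1,\dots,x_n)$ of degree 1 and $(x_1^2,x_1x_2,\dots,x_n^2)$ of degree 2, of the map $A(x)\mapsto A(x)(x_1+\cdots+x_n)$; thus $J_{n,1}\mathbf a$ is the coefficient vector of $(a_1x_1+\cdots+a_nx_n)(x_1+\cdots+x_n)$. *)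

theory Defs
  imports Complex_Main
begin

text \<open>Vectors in R^m are represented as real lists of length m (0-based indices).\<close>

definition Pcnt :: "real list \<Rightarrow> nat" where
  "Pcnt xs = length (filter (\<lambda>x. x > 0) xs)"

definition Ncnt :: "real list \<Rightarrow> nat" where
  "Ncnt xs = length (filter (\<lambda>x. x < 0) xs)"

definition Zcnt :: "real list \<Rightarrow> nat" where
  "Zcnt xs = length (filter (\<lambda>x. x = 0) xs)"

text \<open>Degree-2 monomials x_i x_j (i \<le> j) in left lexicographic order.\<close>
definition mons2 :: "nat \<Rightarrow> (nat \<times> nat) list" where
  "mons2 n = concat (map (\<lambda>i. map (\<lambda>j. (i, j)) [i..<n]) [0..<n])"

text \<open>Matrix entry of J_{n,1}: row indexed by the monomial x_i x_j, column k
  by x_k; it is the coefficient of x_i x_j in x_k (x_1 + ... + x_n).\<close>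
definition Jentry :: "nat \<times> nat \<Rightarrow> nat \<Rightarrow> real" where
  "Jentry m k = (if k = fst m \<or> k = snd m then 1 else 0)"

definition Jmul :: "nat \<Rightarrow> real list \<Rightarrow> real list" where
  "Jmul n a = map (\<lambda>m. \<Sum>k<n. Jentry m k * a ! k) (mons2 n)"

end

theory Submission
  imports Defs
begin

definition sh :: "real \<Rightarrow> real list \<Rightarrow> real list" where
  "sh x xs = map (\<lambda>y. x + y) xs"

fun Jl :: "real list \<Rightarrow> real list" where
  "Jl [] = []"
| "Jl (x # xs) = x # sh x xs @ Jl xs"

lemma cnt_simps[simp]:
  "Pcnt [] = 0" "Ncnt [] = 0" "Zcnt [] = 0"
  "Pcnt (x # xs) = (if x > 0 then 1 else 0) + Pcnt xs"
  "Ncnt (x # xs) = (if x < 0 then 1 else 0) + Ncnt xs"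
  "Zcnt (x # xs) = (if x = 0 then 1 else 0) + Zcnt xs"
  "Pcnt (xs @ ys) = Pcnt xs + Pcnt ys"
  "Ncnt (xs @ ys) = Ncnt xs + Ncnt ys"
  "Zcnt (xs @ ys) = Zcnt xs + Zcnt ys"
  by (auto simp: Pcnt_def Ncnt_def Zcnt_def)

lemma pos_shift:
  assumes "(x::real) > 0"
  shows "Pcnt (sh x xs) \<ge> Pcnt xs + Zcnt xs"
    "Zcnt (sh x xs) \<le> Ncnt xs"
    "Ncnt xs = 0 \<Longrightarrow> Pcnt (sh x xs) = Pcnt xs + Zcnt xs"
    "Ncnt xs = 0 \<Longrightarrow> Zcnt (sh x xs) = 0"
    "Ncnt xs = 0 \<Longrightarrow> Ncnt (sh x xs) = 0"
  using assms by (induction xs) (auto simp: sh_def)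

lemma neg_shift:
  assumes "(x::real) < 0"
  shows "Ncnt (sh x xs) \<ge> Ncnt xs + Zcnt xs"
    "Zcnt (sh x xs) \<le> Pcnt xs"
    "Pcnt xs = 0 \<Longrightarrow> Ncnt (sh x xs) = Ncnt xs + Zcnt xs"
    "Pcnt xs = 0 \<Longrightarrow> Zcnt (sh x xs) = 0"
    "Pcnt xs = 0 \<Longrightarrow> Pcnt (sh x xs) = 0"
  using assms by (induction xs) (auto simp: sh_def)

lemma main:
  fixes a :: "real list"
  shows "2 * Pcnt (Jl a) \<ge> Pcnt a * (Pcnt a + 1) + 2 * Pcnt a * Zcnt a
   \<and> 2 * Ncnt (Jl a) \<ge> Ncnt a * (Ncnt a + 1) + 2 * Ncnt a * Zcnt a
   \<and> 2 * Zcnt (Jl a) \<le> Zcnt a * (Zcnt a + 1) + 2 * Pcnt a * Ncnt a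
   \<and> (Pcnt a * Ncnt a = 0 \<longrightarrow>
      2 * Pcnt (Jl a) = Pcnt a * (Pcnt a + 1) + 2 * Pcnt a * Zcnt a
    \<and> 2 * Ncnt (Jl a) = Ncnt a * (Ncnt a + 1) + 2 * Ncnt a * Zcnt a
    \<and> 2 * Zcnt (Jl a) = Zcnt a * (Zcnt a + 1) + 2 * Pcnt a * Ncnt a)"
proof (induction a)
  case Nil
  then show ?case by simp
next
  case (Cons x xs)
  consider "x > 0" | "x < 0" | "x = 0" by linarith
  then show ?case
  proof cases
    case 1
    note s = pos_shift[OF 1, of xs]
    show ?thesis using Cons.IH 1 s
      by (auto simp: algebra_simps)
  next
    case 2
    note s = neg_shift[OF 2, of xs]
    show ?thesis using Cons.IH 2 s
      by (auto simp: algebra_simps)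
  next
    case 3
    have "sh x xs = xs" using 3 by (simp add: sh_def)
    then show ?thesis using Cons.IH 3
      by (auto simp: algebra_simps)
  qed
qed

lemma entry_val:
  assumes "i < n" "j < n"
  shows "(\<Sum>k<n. Jentry (i, j) k * a ! k) = (if i = j then a ! i else a ! i + a ! j)"
proof -
  have "(\<Sum>k<n. Jentry (i, j) k * a ! k) = (\<Sum>k<n. if k \<in> {i, j} then a ! k else 0)"
    by (rule sum.cong) (auto simp: Jentry_def)
  also have "\<dots> = (\<Sum>k\<in>{i, j}. a ! k)"
    using assms by (subst sum.If_cases) (auto intro: arg_cong2[where f=sum])
  also have "\<dots> = (if i = j then a ! i else a ! i + a ! j)" by auto
  finally show ?thesis .
qed

lemma drop_map_nth: "drop d a = map ((!) a) [d..<length a]"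
  by (rule nth_equalityI) auto

lemma Jmul_blocks:
  assumes "length a = n"
  shows "d \<le> n \<Longrightarrow> map (\<lambda>m. \<Sum>k<n. Jentry m k * a ! k)
     (concat (map (\<lambda>i. map (\<lambda>j. (i, j)) [i..<n]) [d..<n])) = Jl (drop d a)"
proof (induction "n - d" arbitrary: d)
  case 0
  then show ?case using assms by simp
next
  case (Suc m)
  then have dn: "d < n" by simp
  have IH: "map (\<lambda>m. \<Sum>k<n. Jentry m k * a ! k)
     (concat (map (\<lambda>i. map (\<lambda>j. (i, j)) [i..<n]) [Suc d..<n])) = Jl (drop (Suc d) a)"
    using Suc by simp
  have dr: "drop d a = a ! d # drop (Suc d) a" using dn assms by (simp add: Cons_nth_drop_Suc)
  have blk: "map (\<lambda>m. \<Sum>k<n. Jentry m k * a ! k) (map (\<lambda>j. (d, j)) [Suc d..<n])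
      = sh (a ! d) (drop (Suc d) a)"
    using dn assms by (auto simp: sh_def drop_map_nth entry_val)
  show ?case
    using dn IH blk entry_val[OF dn dn, of a]
    by (simp add: upt_conv_Cons dr)
qed

lemma Jmul_eq: "length a = n \<Longrightarrow> Jmul n a = Jl a"
  using Jmul_blocks[of a n 0] by (simp add: Jmul_def mons2_def)

theorem lemma3p1:
  fixes n :: nat and a :: "real list"
  assumes "n \<ge> 1" and "length a = n"
  defines "P \<equiv> real (Pcnt a)" and "N \<equiv> real (Ncnt a)" and "Z \<equiv> real (Zcnt a)"
  shows "real (Pcnt (Jmul n a)) \<ge> P * (P + 1) / 2 + P * Z
       \<and> real (Ncnt (Jmul n a)) \<ge> N * (N + 1) / 2 + N * Z
       \<and> real (Zcnt (Jmul n a)) \<le> Z * (Z + 1) / 2 + P * N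
       \<and> (P * N = 0 \<longrightarrow>
            real (Pcnt (Jmul n a)) = P * (P + 1) / 2 + P * Z
          \<and> real (Ncnt (Jmul n a)) = N * (N + 1) / 2 + N * Z
          \<and> real (Zcnt (Jmul n a)) = Z * (Z + 1) / 2 + P * N)"
proof -
  have J: "Jmul n a = Jl a" using Jmul_eq[OF assms(2)] .
  note M = main[of a]
  have r1: "real (2 * Pcnt (Jl a)) \<ge> real (Pcnt a * (Pcnt a + 1) + 2 * Pcnt a * Zcnt a)"
    using M of_nat_mono by blast
  have r2: "real (2 * Ncnt (Jl a)) \<ge> real (Ncnt a * (Ncnt a + 1) + 2 * Ncnt a * Zcnt a)"
    using M of_nat_mono by blast
  have r3: "real (2 * Zcnt (Jl a)) \<le> real (Zcnt a * (Zcnt a + 1) + 2 * Pcnt a * Ncnt a)"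
    using M of_nat_mono by blast
  have PN: "P * N = 0 \<longleftrightarrow> Pcnt a * Ncnt a = 0" unfolding P_def N_def by simp
  have r4: "P * N = 0 \<Longrightarrow>
      real (2 * Pcnt (Jl a)) = real (Pcnt a * (Pcnt a + 1) + 2 * Pcnt a * Zcnt a)
    \<and> real (2 * Ncnt (Jl a)) = real (Ncnt a * (Ncnt a + 1) + 2 * Ncnt a * Zcnt a)
    \<and> real (2 * Zcnt (Jl a)) = real (Zcnt a * (Zcnt a + 1) + 2 * Pcnt a * Ncnt a)"
    using M PN by metis
  show ?thesis
    using r1 r2 r3 r4 unfolding J P_def N_def Z_def
    by (simp add: field_simps)
qed

end
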